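(* Let $G$ be a non-abelian subgroup of $\mathcal{H}(n,\mathbb{C})$ with $\Lambda_G\not\subset\mathbb{R}$, $G\not\subset\mathcal{SR}_n$, and suppose $U:=\mathbb{C}^n\setminus E_G\neq\emptyset$. Then: (i) every orbit $G(z)$ with $z\in U$ is minimal in $U$, i.e. $\overline{G(w)}\cap U=\overline{G(z)}\cap U$ for every $w\in\overline{G(z)}\cap U$; (ii) if moreover $G\not\subset\mathcal{R}_n$, then $E_G$ is a minimal set of $G$ in $\mathbb{C}^n$ (a nonempty closed $G$-invariant set containing no proper nonempty closed $G$-invariant subset) and $E_G\subset\overline{G(z)}$ for every $z\in\mathbb{C}^n$; (iii) any two orbits $G(z)$, $G(y)$ with $z,y\in U$ are homeomorphic.
   Context: $\mathcal{H}(n,\mathbb{C})$ is the group of all maps $z\mapsto\lambda z+b$ of $\mathbb{C}^n$ with $\lambda\in\mathbb{C}^*$, $b\in\mathbb{C}^n$ ($\lambda$ = ratio). $\mathcal{T}_n$ = translations; $\mathcal{R}_n$ = elements whose ratio has modulus $1$. Every element of $\mathcal{H}(n,\mathbb{C})\setminus\mathcal{T}_n$ has a unique fixed point, its center. $H_2=(\frac{\pi}{2}+\pi\mathbb{Z})\cup\pi\mathbb{Z}$, $F_2=\{e^{ix}:x\in H_2\}$, $H_3=(\frac{\pi}{3}+\pi\mathbb{Z})\cup(-\frac{\pi}{3}+\pi\mathbb{Z})\cup\pi\mathbb{Z}$, $F_3=\{e^{ix}:x\in H_3\}$; $\mathcal{S}_i\mathcal{R}_n=\{z\mapsto\lambda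 z+b:\lambda\in F_i, b\in\mathbb{C}^n\}$, $\mathcal{SR}_n=\mathcal{S}_2\mathcal{R}_n\cup\mathcal{S}_3\mathcal{R}_n$. For a subgroup $G$: $G(z)$ is the orbit of $z$; $\Lambda_G$ the set of ratios of elements of $G$; $\Gamma_G$ the set of centers of elements of $G\setminus\mathcal{T}_n$; $E_G$ the smallest complex affine subspace of $\mathbb{C}^n$ containing $\Gamma_G$. Bars denote closure. *)

theory Defs
  imports "HOL-Analysis.Analysis"
begin

text \<open>Points of C^n are vectors of type complex ^ 'n ('n a finite index type, n = CARD('n)).
  Elements of H(n,C) are represented as the maps themselves.\<close>

definition homothety_maps :: "(complex^'n \<Rightarrow> complex^'n) set" where
  "homothety_maps = {f. \<exists>(l::complex) b. l \<noteq> 0 \<and> f = (\<lambda>z. l *s z + b)}"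

definition ratio :: "(complex^'n \<Rightarrow> complex^'n) \<Rightarrow> complex" where
  "ratio f = (THE l. \<exists>b. f = (\<lambda>z. l *s z + b))"

definition is_subgroup_H :: "(complex^'n \<Rightarrow> complex^'n) set \<Rightarrow> bool" where
  "is_subgroup_H G \<longleftrightarrow> G \<subseteq> homothety_maps \<and> id \<in> G \<and>
     (\<forall>f\<in>G. \<forall>g\<in>G. f \<circ> g \<in> G) \<and> (\<forall>f\<in>G. inv f \<in> G)"

definition transl_maps :: "(complex^'n \<Rightarrow> complex^'n) set" where
  "transl_maps = {f \<in> homothety_maps. ratio f = 1}"

definition rot_maps :: "(complex^'n \<Rightarrow> complex^'n) set" where
  "rot_maps = {f \<in> homothety_maps. cmod (ratio f) = 1}"

definition H2 :: "real set" where
  "H2 = {pi/2 + pi * of_int k | k. True} \<union> {pi * of_int k | k. True}"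

definition H3 :: "real set" where
  "H3 = {pi/3 + pi * of_int k | k. True} \<union> {- pi/3 + pi * of_int k | k. True}
        \<union> {pi * of_int k | k. True}"

definition F2 :: "complex set" where
  "F2 = {exp (\<i> * complex_of_real x) | x. x \<in> H2}"

definition F3 :: "complex set" where
  "F3 = {exp (\<i> * complex_of_real x) | x. x \<in> H3}"

definition S2R :: "(complex^'n \<Rightarrow> complex^'n) set" where
  "S2R = {f. \<exists>l b. l \<in> F2 \<and> f = (\<lambda>z. l *s z + b)}"

definition S3R :: "(complex^'n \<Rightarrow> complex^'n) set" where
  "S3R = {f. \<exists>l b. l \<in> F3 \<and> f = (\<lambda>z. l *s z + b)}"

definition SR :: "(complex^'n \<Rightarrow> complex^'n) set" where
  "SR = S2R \<union> S3R"

definition orbit :: "(complex^'n \<Rightarrow> complex^'n) set \<Rightarrow> complex^'n \<Rightarrow> (complex^'n) set" where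
  "orbit G z = {f z | f. f \<in> G}"

definition ratios :: "(complex^'n \<Rightarrow> complex^'n) set \<Rightarrow> complex set" where
  "ratios G = ratio ` G"

text \<open>Centers of elements of G that are not transl_maps (each such element has a unique fixed point).\<close>
definition centers :: "(complex^'n \<Rightarrow> complex^'n) set \<Rightarrow> (complex^'n) set" where
  "centers G = {c. \<exists>f \<in> G - transl_maps. f c = c}"

definition complex_affine :: "(complex^'n) set \<Rightarrow> bool" where
  "complex_affine S \<longleftrightarrow> (\<forall>x\<in>S. \<forall>y\<in>S. \<forall>u::complex. (1 - u) *s x + u *s y \<in> S)"

definition E_G :: "(complex^'n \<Rightarrow> complex^'n) set \<Rightarrow> (complex^'n) set" where
  "E_G G = \<Inter>{A. complex_affine A \<and> centers G \<subseteq> A}"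

definition invariant_set :: "(complex^'n \<Rightarrow> complex^'n) set \<Rightarrow> (complex^'n) set \<Rightarrow> bool" where
  "invariant_set G A \<longleftrightarrow> (\<forall>f\<in>G. f ` A \<subseteq> A)"

definition minimal_set :: "(complex^'n \<Rightarrow> complex^'n) set \<Rightarrow> (complex^'n) set \<Rightarrow> bool" where
  "minimal_set G M \<longleftrightarrow> M \<noteq> {} \<and> closed M \<and> invariant_set G M \<and>
     (\<forall>A. A \<noteq> {} \<and> closed A \<and> A \<subseteq> M \<and> invariant_set G A \<longrightarrow> A = M)"

end

theory Submission
  imports Defs
begin

definition HH :: "complex \<Rightarrow> complex^'n \<Rightarrow> complex^'n \<Rightarrow> complex^'n" where
  "HH l b = (\<lambda>z. l *s z + b)"

lemma HH_apply[simp]: "HH l b z = l *s z + b" by (simp add: HH_def)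

lemma HH_inj_ratio: "HH l b = HH l' b' \<Longrightarrow> l = l' \<and> b = b'"
proof -
  assume h: "HH l b = HH l' b'"
  have b: "b = b'" using fun_cong[OF h, of 0] by simp
  have "HH l b (vec 1) $ undefined = HH l' b' (vec 1) $ undefined" using h by simp
  then show ?thesis using b by simp
qed

lemma ratio_HH[simp]: "ratio (HH l b) = l"
  unfolding ratio_def
proof (rule the_equality)
  show "\<exists>b'. HH l b = (\<lambda>z. l *s z + b')" by (auto simp: HH_def)
  fix l' assume "\<exists>b'. HH l b = (\<lambda>z. l' *s z + b')"
  then obtain b' where "HH l b = HH l' b'" by (auto simp: HH_def)
  then show "l' = l" using HH_inj_ratio by blast
qed

lemma HH_comp: "HH l b \<circ> HH m c = HH (l*m) (l *s c + b)"
  by (rule ext) (simp add: vec_eq_iff field_simps)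

lemma HH_inv: "l \<noteq> 0 \<Longrightarrow> inv (HH l b) = HH (1/l) (- ((1/l) *s b))"
  by (rule inv_equality) (simp_all add: vec_eq_iff field_simps)

lemma HH_id: "id = HH 1 0"
  by (rule ext) (simp add: vec_eq_iff)

lemma homothety_HH: "f \<in> homothety_maps \<Longrightarrow> \<exists>l b. l \<noteq> 0 \<and> f = HH l b"
  by (auto simp: homothety_maps_def HH_def)

lemma norm_smult: "norm (c *s (x::complex^'n)) = norm c * norm x"
  unfolding norm_vec_def
  by (simp add: L2_set_right_distrib norm_mult)

lemma dist_HH: "dist (HH l b x) (HH l b y) = norm l * dist x y"
proof -
  have e: "HH l b x - HH l b y = l *s (x - y)" by (simp add: vec_eq_iff field_simps)
  have "dist (HH l b x) (HH l b y) = norm (HH l b x - HH l b y)" by (rule dist_norm)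
  also have "\<dots> = norm (l *s (x - y))" by (simp only: e)
  finally show ?thesis by (simp only: norm_smult dist_norm)
qed

lemma continuous_HH: "continuous_on S (HH l b)"
proof -
  have "HH l b = (\<lambda>z. \<chi> i. l * z$i + b$i)" by (rule ext) (simp add: vec_eq_iff)
  then show ?thesis by (simp, intro continuous_intros)
qed

lemma scaleR_smult: "r *\<^sub>R (x::complex^'n) = complex_of_real r *s x"
proof (rule vec_eq_iff[THEN iffD2], rule allI)
  fix i show "(r *\<^sub>R x) $ i = (complex_of_real r *s x) $ i" by (subst vector_scaleR_component) (simp add: scaleR_conv_of_real)
qed

lemma complex_affine_affine: "complex_affine S \<Longrightarrow> affine S"
  unfolding complex_affine_def affine_def
proof (intro ballI allI impI)
  fix x y u v assume A: "\<forall>x\<in>S. \<forall>y\<in>S. \<forall>u::complex. (1 - u) *s x + u *s y \<in> S"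
    and x: "x \<in> S" and y: "y \<in> S" and uv: "u + v = (1::real)"
  have "(1 - complex_of_real v) *s x + complex_of_real v *s y \<in> S" using A x y by blast
  moreover have "1 - complex_of_real v = complex_of_real u" using uv by (metis add_diff_cancel_right' of_real_1 of_real_add)
  ultimately show "u *\<^sub>R x + v *\<^sub>R y \<in> S" by (simp add: scaleR_smult)
qed

lemma complex_affine_Inter: "\<forall>A\<in>F. complex_affine A \<Longrightarrow> complex_affine (\<Inter>F)"
  unfolding complex_affine_def by blast

lemma E_G_affine: "complex_affine (E_G G)"
  unfolding E_G_def by (rule complex_affine_Inter) blast

lemma centers_E_G: "centers G \<subseteq> E_G G"
  unfolding E_G_def by blast

lemma E_G_closed: "closed (E_G G)"
  by (rule affine_closed, rule complex_affine_affine, rule E_G_affine)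

lemma E_G_least: "complex_affine A \<Longrightarrow> centers G \<subseteq> A \<Longrightarrow> E_G G \<subseteq> A"
  unfolding E_G_def by blast

context
  fixes G :: "(complex^'n \<Rightarrow> complex^'n) set"
  assumes sg: "is_subgroup_H G"
begin

lemma G_HH: "f \<in> G \<Longrightarrow> \<exists>l b. l \<noteq> 0 \<and> f = HH l b"
  using sg homothety_HH unfolding is_subgroup_H_def by blast

lemma G_comp: "f \<in> G \<Longrightarrow> g \<in> G \<Longrightarrow> f \<circ> g \<in> G"
  using sg unfolding is_subgroup_H_def by blast

lemma G_inv: "f \<in> G \<Longrightarrow> inv f \<in> G"
  using sg unfolding is_subgroup_H_def by blast

lemma G_id: "id \<in> G"
  using sg unfolding is_subgroup_H_def by blast

lemma centersI: "f \<in> G \<Longrightarrow> ratio f \<noteq> 1 \<Longrightarrow> f c = c \<Longrightarrow> c \<in> centers G"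
  unfolding centers_def transl_maps_def by blast

lemma centersD: "c \<in> centers G \<Longrightarrow> \<exists>l b. l \<noteq> 0 \<and> l \<noteq> 1 \<and> HH l b \<in> G \<and> HH l b c = c"
proof -
  assume "c \<in> centers G"
  then obtain f where f: "f \<in> G" "f \<notin> transl_maps" "f c = c" unfolding centers_def by blast
  obtain l b where lb: "l \<noteq> 0" "f = HH l b" using G_HH f(1) by blast
  have "f \<in> homothety_maps" using sg f(1) unfolding is_subgroup_H_def by blast
  then have "l \<noteq> 1" using f(2) lb unfolding transl_maps_def by auto
  then show ?thesis using lb f by blast
qed

lemma centers_invariant: "f \<in> G \<Longrightarrow> c \<in> centers G \<Longrightarrow> f c \<in> centers G"
proof -
  assume f: "f \<in> G" and c: "c \<in> centers G"
  obtain l b where lb: "l \<noteq> 0" "l \<noteq> 1" "HH l b \<in> G" "HH l b c = c" using centersD c by blast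
  obtain m e where me: "m \<noteq> 0" "f = HH m e" using G_HH f by blast
  have g: "f \<circ> HH l b \<circ> inv f \<in> G" using G_comp G_inv f lb(3) by blast
  have eq: "f \<circ> HH l b \<circ> inv f = HH l (m *s (l *s (- ((1/m) *s e)) + b) + e)"
    by (rule ext) (simp add: me HH_inv vec_eq_iff field_simps)
  have r: "ratio (f \<circ> HH l b \<circ> inv f) \<noteq> 1" using eq lb me by simp
  have "inv f (f c) = c" using me by (simp add: HH_inv vec_eq_iff field_simps)
  then have "(f \<circ> HH l b \<circ> inv f) (f c) = f c" using lb(4) by simp
  then show ?thesis using centersI[OF g r] by blast
qed

lemma E_G_invariant: "f \<in> G \<Longrightarrow> f ` E_G G \<subseteq> E_G G"
proof -
  assume f: "f \<in> G"
  obtain m e where me: "m \<noteq> 0" "f = HH m e" using G_HH f by blast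
  let ?A = "{x. f x \<in> E_G G}"
  have "complex_affine ?A"
    unfolding complex_affine_def
  proof (intro ballI allI)
    fix x y u assume "x \<in> ?A" "y \<in> ?A"
    then have "(1 - u) *s f x + u *s f y \<in> E_G G" using E_G_affine unfolding complex_affine_def by blast
    moreover have "f ((1 - u) *s x + u *s y) = (1 - u) *s f x + u *s f y"
      using me by (simp add: vec_eq_iff field_simps)
    ultimately show "(1 - u) *s x + u *s y \<in> ?A" by simp
  qed
  moreover have "centers G \<subseteq> ?A" using centers_invariant f centers_E_G by blast
  ultimately have "E_G G \<subseteq> ?A" by (rule E_G_least)
  then show ?thesis by blast
qed

lemma E_G_nonempty:
  assumes "\<not> ratios G \<subseteq> \<real>"
  shows "E_G G \<noteq> {}"
proof -
  obtain f where f: "f \<in> G" "ratio f \<notin> \<real>" using assms unfolding ratios_def by blast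
  obtain l b where lb: "l \<noteq> 0" "f = HH l b" using G_HH f(1) by blast
  have l1: "l \<noteq> 1" using f(2) lb by auto
  let ?c = "(1/(1-l)) *s b"
  have fc: "f ?c = ?c" using lb l1 by (simp add: vec_eq_iff field_simps)
  have r: "ratio f \<noteq> 1" using lb l1 by simp
  have "?c \<in> centers G" by (rule centersI[OF f(1) r fc])
  then show ?thesis using centers_E_G by blast
qed

lemma orbit_invariant: "f \<in> G \<Longrightarrow> f ` orbit G x \<subseteq> orbit G x"
proof
  fix u assume f: "f \<in> G" and "u \<in> f ` orbit G x"
  then obtain g where g: "g \<in> G" "u = f (g x)" unfolding orbit_def by blast
  have "f \<circ> g \<in> G" using G_comp f g by blast
  then show "u \<in> orbit G x" unfolding orbit_def using g(2) by (metis (mono_tags, lifting) comp_apply mem_Collect_eq)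
qed

lemma orbit_self: "x \<in> orbit G x"
  unfolding orbit_def mem_Collect_eq by (rule exI[of _ id]) (simp add: G_id)

lemma closure_orbit_sub:
  assumes "y \<in> closure (orbit G x)"
  shows "closure (orbit G y) \<subseteq> closure (orbit G x)"
proof (rule closure_minimal)
  show "orbit G y \<subseteq> closure (orbit G x)"
  proof
    fix u assume "u \<in> orbit G y"
    then obtain f where f: "f \<in> G" "u = f y" unfolding orbit_def by blast
    obtain l b where lb: "f = HH l b" using G_HH f(1) by blast
    have "f ` closure (orbit G x) \<subseteq> closure (orbit G x)"
    proof (rule image_closure_subset)
      show "continuous_on (closure (orbit G x)) f" by (simp only: lb continuous_HH)
      show "f ` orbit G x \<subseteq> closure (orbit G x)" using orbit_invariant[OF f(1)] closure_subset by blast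
    qed simp
    then show "u \<in> closure (orbit G x)" using assms f by blast
  qed
qed simp

lemma infdist_HH:
  assumes "HH l b \<in> G" "E_G G \<noteq> {}"
  shows "infdist (HH l b x) (E_G G) \<le> norm l * infdist x (E_G G)"
proof (cases "l = 0")
  case True
  have "HH l b x \<in> E_G G"
  proof -
    obtain a where a: "a \<in> E_G G" using assms(2) by blast
    have "HH l b a \<in> E_G G" using E_G_invariant[OF assms(1)] a by blast
    then show ?thesis using True by simp
  qed
  then show ?thesis using True by (simp add: in_closed_iff_infdist_zero[OF E_G_closed assms(2), symmetric])
next
  case False
  have "infdist (HH l b x) (E_G G) / norm l \<le> infdist x (E_G G)"
    unfolding infdist_notempty[OF assms(2), of x]
  proof (rule cINF_greatest[OF assms(2)])
    fix a assume a: "a \<in> E_G G"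
    have "HH l b a \<in> E_G G" using E_G_invariant[OF assms(1)] a by blast
    then have "infdist (HH l b x) (E_G G) \<le> norm l * dist x a" using infdist_le dist_HH by metis
    then show "infdist (HH l b x) (E_G G) / norm l \<le> dist x a" using False by (simp add: field_simps)
  qed
  then show ?thesis using False by (simp add: field_simps)
qed

lemma lip_orbit:
  assumes z: "z \<notin> E_G G" and ne: "E_G G \<noteq> {}" and f: "f \<in> G" and g: "g \<in> G"
  shows "dist (f y) (g y) \<le> (1 + dist y z / infdist z (E_G G)) * dist (f z) (g z)"
proof -
  define dz where "dz = infdist z (E_G G)"
  have dz: "dz > 0" unfolding dz_def using infdist_pos_not_in_closed[OF E_G_closed ne z] .
  obtain l b where lb: "l \<noteq> 0" "f = HH l b" using G_HH f by blast
  obtain m c where mc: "m \<noteq> 0" "g = HH m c" using G_HH g by blast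
  show ?thesis
  proof (cases "l = m")
    case True
    have e: "f y - g y = f z - g z" using lb mc True by (simp add: vec_eq_iff)
    have "dist (f y) (g y) = dist (f z) (g z)" using e by (simp add: dist_norm)
    moreover have "0 \<le> dist y z / dz" using dz by simp
    ultimately show ?thesis unfolding dz_def[symmetric]
      by (metis add_increasing2 mult_cancel_right1 mult_right_mono order_refl zero_le_dist less_eq_real_def)
  next
    case False
    define p where "p = (1/(m-l)) *s (b - c)"
    have fp: "f p = g p" using lb mc False unfolding p_def by (simp add: vec_eq_iff field_simps)
    have h: "inv f \<circ> g \<in> G" using G_comp G_inv f g by blast
    have hr: "ratio (inv f \<circ> g) \<noteq> 1"
    proof -
      have "inv f \<circ> g = HH (m/l) ((1/l) *s (c - b))"
        by (rule ext) (simp add: lb mc HH_inv vec_eq_iff field_simps)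
      then show ?thesis using False lb by simp
    qed
    have "inv f (f p) = p" using lb by (simp add: HH_inv vec_eq_iff field_simps)
    then have "(inv f \<circ> g) p = p" using fp by simp
    then have "p \<in> E_G G" using centersI[OF h hr] centers_E_G by blast
    then have pz: "dz \<le> dist z p" unfolding dz_def by (rule infdist_le)
    have gf: "\<And>x. g x - f x = (m - l) *s (x - p)"
      using lb mc False unfolding p_def by (simp add: vec_eq_iff field_simps)
    have dfg: "\<And>x. dist (f x) (g x) = norm (m - l) * dist x p"
      by (metis dist_commute dist_norm gf norm_smult)
    have "norm (m - l) * dz \<le> dist (f z) (g z)" using dfg pz by (simp add: mult_left_mono)
    then have ml: "norm (m - l) \<le> dist (f z) (g z) / dz" using dz by (simp add: field_simps)
    have "dist (f y) (g y) \<le> norm (m - l) * (dist y z + dist z p)"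
      using dfg[of y] dist_triangle[of y p z] by (simp add: mult_left_mono)
    also have "\<dots> = norm (m - l) * dist y z + dist (f z) (g z)" using dfg[of z] by (simp add: algebra_simps)
    also have "\<dots> \<le> dist (f z) (g z) / dz * dist y z + dist (f z) (g z)"
      using mult_right_mono[OF ml zero_le_dist[of y z]] by simp
    also have "\<dots> = (1 + dist y z / dz) * dist (f z) (g z)" by (simp add: algebra_simps)
    finally show ?thesis unfolding dz_def .
  qed
qed

lemma back_in_closure:
  assumes z: "z \<notin> E_G G" and ne: "E_G G \<noteq> {}" and w: "w \<in> closure (orbit G z)" "w \<notin> E_G G"
  shows "z \<in> closure (orbit G w)"
  unfolding closure_approachable
proof (intro allI impI)
  fix e :: real assume e: "e > 0"
  define dz where "dz = infdist z (E_G G)"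
  have dz: "dz > 0" unfolding dz_def using infdist_pos_not_in_closed[OF E_G_closed ne z] .
  define dw where "dw = infdist w (E_G G)"
  have dw: "dw > 0" unfolding dw_def using infdist_pos_not_in_closed[OF E_G_closed ne w(2)] .
  define ep where "ep = min (dw/2) (e*dw/(2*dz))"
  have ep: "ep > 0" unfolding ep_def using dz dw e by simp
  obtain x where x: "x \<in> orbit G z" "dist x w < ep" using w(1) ep unfolding closure_approachable by blast
  obtain f where f: "f \<in> G" "x = f z" using x(1) unfolding orbit_def by blast
  obtain l b where lb: "l \<noteq> 0" "f = HH l b" using G_HH f(1) by blast
  have "dw \<le> infdist x (E_G G) + dist w x" unfolding dw_def by (rule infdist_triangle)
  moreover have "infdist x (E_G G) \<le> norm l * dz" unfolding dz_def f(2) lb(2)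
    by (rule infdist_HH) (use f lb ne in auto)
  moreover have "dist w x < dw/2" using x(2) unfolding ep_def by (simp add: dist_commute)
  ultimately have nl: "norm l * dz > dw/2" by simp
  have iv: "inv f = HH (1/l) (- ((1/l) *s b))" using lb by (simp add: HH_inv)
  have "inv f w \<in> orbit G w" unfolding orbit_def using G_inv[OF f(1)] by blast
  moreover have "dist (inv f w) z < e"
  proof -
    have "inv f x = z" using lb f(2) by (simp add: HH_inv vec_eq_iff field_simps)
    then have "dist (inv f w) z = norm (1/l) * dist w x" using dist_HH iv by metis
    also have "\<dots> = dist w x / norm l" by (simp add: norm_divide)
    also have "\<dots> < e" 
    proof -
      have "dist w x < e*dw/(2*dz)" using x(2) unfolding ep_def by (simp add: dist_commute)
      also have "\<dots> < e * norm l" using nl e dz by (simp add: field_simps)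
      finally show ?thesis using lb by (simp add: field_simps)
    qed
    finally show ?thesis .
  qed
  ultimately show "\<exists>y\<in>orbit G w. dist y z < e" by blast
qed

lemma aux_lt: "0 \<le> K \<Longrightarrow> 0 < (e::real) \<Longrightarrow> K * (e/(K+1)) < e"
  by (simp add: field_simps)

definition TG where "TG = {t. HH 1 t \<in> G}"
definition DG where "DG = closure TG"
definition RG where "RG = {a. \<forall>d\<in>DG. a *s d \<in> DG}"

lemma TG_0: "0 \<in> TG"
  unfolding TG_def using G_id by (simp add: HH_id[symmetric])

lemma TG_add: "s \<in> TG \<Longrightarrow> t \<in> TG \<Longrightarrow> s + t \<in> TG"
proof -
  assume "s \<in> TG" "t \<in> TG"
  then have "HH 1 s \<circ> HH 1 t \<in> G" unfolding TG_def using G_comp by blast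
  moreover have "HH 1 s \<circ> HH 1 t = HH 1 (s + t)" by (rule ext) (simp add: vec_eq_iff)
  ultimately show ?thesis unfolding TG_def by simp
qed

lemma TG_neg: "t \<in> TG \<Longrightarrow> - t \<in> TG"
proof -
  assume "t \<in> TG"
  then have "inv (HH 1 t) \<in> G" unfolding TG_def using G_inv by blast
  then show ?thesis unfolding TG_def by (simp add: HH_inv)
qed

lemma TG_scale: "t \<in> TG \<Longrightarrow> HH l b \<in> G \<Longrightarrow> l \<noteq> 0 \<Longrightarrow> l *s t \<in> TG"
proof -
  assume t: "t \<in> TG" and f: "HH l b \<in> G" and l: "l \<noteq> 0"
  have "HH l b \<circ> HH 1 t \<circ> inv (HH l b) \<in> G" using t f G_comp G_inv unfolding TG_def by blast
  moreover have "HH l b \<circ> HH 1 t \<circ> inv (HH l b) = HH 1 (l *s t)"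
    by (rule ext) (simp add: l HH_inv vec_eq_iff field_simps)
  ultimately show ?thesis unfolding TG_def by simp
qed

lemma DG_closed: "closed DG" unfolding DG_def by simp

lemma TG_DG: "TG \<subseteq> DG" unfolding DG_def by (rule closure_subset)

lemma DG_add: assumes "s \<in> DG" "t \<in> DG" shows "s + t \<in> DG"
proof -
  have "\<forall>e>0. \<exists>y\<in>TG. dist y (s + t) < e"
  proof (intro allI impI)
    fix e :: real assume e: "e > 0"
    obtain s' where s': "s' \<in> TG" "dist s' s < e/2" using assms(1) e unfolding DG_def closure_approachable by (meson half_gt_zero)
    obtain t' where t': "t' \<in> TG" "dist t' t < e/2" using assms(2) e unfolding DG_def closure_approachable by (meson half_gt_zero)
    have "dist (s' + t') (s + t) \<le> dist s' s + dist t' t" by (rule dist_triangle_add)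
    then show "\<exists>y\<in>TG. dist y (s + t) < e" using s' t' TG_add by (intro bexI[of _ "s'+t'"]) auto
  qed
  then show ?thesis unfolding DG_def closure_approachable .
qed

lemma DG_scale_gen: assumes "t \<in> DG" and sc: "\<And>u. u \<in> TG \<Longrightarrow> a *s u \<in> TG" shows "a *s t \<in> DG"
proof -
  have "\<forall>e>0. \<exists>y\<in>TG. dist y (a *s t) < e"
  proof (intro allI impI)
    fix e :: real assume e: "e > 0"
    obtain t' where t': "t' \<in> TG" "dist t' t < e/(norm a + 1)"
    proof -
      have "e/(norm a + 1) > 0" using e by (simp add: add_nonneg_pos)
      then show ?thesis using assms(1) that unfolding DG_def closure_approachable by blast
    qed
    have "dist (a *s t') (a *s t) = norm a * dist t' t"
      using dist_HH[of a 0 t' t] by simp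
    also have "\<dots> \<le> norm a * (e/(norm a + 1))" using mult_left_mono[OF less_imp_le[OF t'(2)] norm_ge_zero] by simp
    also have "\<dots> < e" using aux_lt[OF norm_ge_zero[of a] e] .
    finally show "\<exists>y\<in>TG. dist y (a *s t) < e" using t' sc by blast
  qed
  then show ?thesis unfolding DG_def closure_approachable .
qed

lemma neg_smult: "(-1) *s (u::complex^'n) = - u" by (simp add: vec_eq_iff)

lemma DG_neg: assumes "t \<in> DG" shows "- t \<in> DG"
proof -
  have "(-1) *s t \<in> DG"
    by (rule DG_scale_gen[OF assms]) (simp only: neg_smult TG_neg)
  then show ?thesis by (simp only: neg_smult)
qed

lemma DG_0: "0 \<in> DG" using TG_0 TG_DG by blast

lemma RG_ratio: "HH l b \<in> G \<Longrightarrow> l \<noteq> 0 \<Longrightarrow> l \<in> RG"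
proof -
  assume f: "HH l b \<in> G" and l: "l \<noteq> 0"
  show "l \<in> RG" unfolding RG_def mem_Collect_eq
  proof (intro ballI)
    fix d assume d: "d \<in> DG"
    show "l *s d \<in> DG" by (rule DG_scale_gen[OF d]) (rule TG_scale[OF _ f l])
  qed
qed

lemma RG_1: "1 \<in> RG" unfolding RG_def by simp

lemma RG_add: assumes "a \<in> RG" "b \<in> RG" shows "a + b \<in> RG"
  unfolding RG_def mem_Collect_eq
proof (intro ballI)
  fix d assume d: "d \<in> DG"
  have m: "a *s d + b *s d \<in> DG" using assms d DG_add unfolding RG_def by blast
  have eq: "(a + b) *s d = a *s d + b *s d" by (simp add: vec_eq_iff algebra_simps)
  show "(a + b) *s d \<in> DG" by (subst eq) (rule m)
qed

lemma RG_mult: assumes "a \<in> RG" "b \<in> RG" shows "a * b \<in> RG"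
  unfolding RG_def mem_Collect_eq
proof (intro ballI)
  fix d assume d: "d \<in> DG"
  have m: "a *s (b *s d) \<in> DG" using assms d unfolding RG_def by blast
  have eq: "(a * b) *s d = a *s (b *s d)" by (simp add: vec_eq_iff)
  show "(a * b) *s d \<in> DG" by (subst eq) (rule m)
qed

lemma RG_neg: "a \<in> RG \<Longrightarrow> - a \<in> RG"
proof -
  assume a: "a \<in> RG"
  show "- a \<in> RG" unfolding RG_def mem_Collect_eq
  proof (intro ballI)
    fix d assume d: "d \<in> DG"
    have "a *s d \<in> DG" using a d unfolding RG_def by blast
    then have m: "- (a *s d) \<in> DG" by (rule DG_neg)
    have eq: "(- a) *s d = - (a *s d)" by (simp add: vec_eq_iff)
    show "(- a) *s d \<in> DG" by (subst eq) (rule m)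
  qed
qed

lemma RG_0: "0 \<in> RG" unfolding RG_def using DG_0 by simp

lemma RG_nat: assumes a: "a \<in> RG" shows "of_nat n * a \<in> RG"
proof (induction n)
  case 0 show ?case using RG_0 by simp
next
  case (Suc n)
  have "of_nat (Suc n) * a = of_nat n * a + a" by (simp add: algebra_simps)
  then show ?case using RG_add[OF Suc a] by simp
qed

lemma RG_int: assumes a: "a \<in> RG" shows "of_int k * a \<in> RG"
proof (cases k rule: int_cases)
  case (nonneg n) then show ?thesis using RG_nat[OF a, of n] by simp
next
  case (neg n)
  have h: "- (of_nat (Suc n) * a) \<in> RG" using RG_neg RG_nat a by blast
  have "(of_int k :: complex) = - of_nat (Suc n)" using neg by simp
  then have "of_int k * a = - (of_nat (Suc n) * a)" by (simp only: mult_minus_left)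
  then show ?thesis using h by simp
qed

lemma RG_pow: assumes "a \<in> RG" shows "a ^ k \<in> RG"
  by (induction k) (simp_all add: RG_1 RG_mult assms)
lemma RG_dense:
  assumes nu: "\<nu> \<in> RG" "\<nu> \<noteq> 0" "norm \<nu> < 1" and l1: "lam \<in> RG" "Im lam \<noteq> 0" and e: "e > 0"
  shows "\<exists>r\<in>RG. norm (r - x) < e"
proof -
  obtain k where k: "norm \<nu> ^ k < e / (1 + norm lam)"
    using real_arch_pow_inv[of "e / (1 + norm lam)" "norm \<nu>"] nu e by (auto simp: add_pos_nonneg)
  define a where "a = \<nu> ^ k"
  have a: "a \<in> RG" "a \<noteq> 0" "norm a < e / (1 + norm lam)" unfolding a_def using RG_pow nu k by (auto simp: norm_power)
  define q where "q = x / a"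
  define t where "t = Im q / Im lam"
  define s where "s = Re q - t * Re lam"
  have q: "q = complex_of_real s + complex_of_real t * lam"
    using l1(2) unfolding s_def t_def by (simp add: complex_eq_iff field_simps)
  define r where "r = of_int \<lfloor>s\<rfloor> * a + of_int \<lfloor>t\<rfloor> * (lam * a)"
  have r: "r \<in> RG" unfolding r_def using RG_add RG_int RG_mult a l1 by blast
  have x: "x = q * a" unfolding q_def using a by simp
  define A where "A = complex_of_real (of_int \<lfloor>s\<rfloor> - s)"
  define B where "B = complex_of_real (of_int \<lfloor>t\<rfloor> - t)"
  have "r - x = (A + B * lam) * a"
    unfolding r_def x q A_def B_def by (simp add: algebra_simps)
  then have "norm (r - x) = norm (A + B * lam) * norm a" by (simp only: norm_mult)
  also have "\<dots> \<le> (norm A + norm B * norm lam) * norm a"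
  proof (rule mult_right_mono)
    show "norm (A + B * lam) \<le> norm A + norm B * norm lam"
      using norm_triangle_ineq[of A "B * lam"] by (simp add: norm_mult)
  qed simp
  also have "\<dots> = (\<bar>of_int \<lfloor>s\<rfloor> - s\<bar> + \<bar>of_int \<lfloor>t\<rfloor> - t\<bar> * norm lam) * norm a"
    unfolding A_def B_def by (simp only: norm_of_real)
  also have "\<dots> \<le> (1 + norm lam) * norm a"
  proof -
    have h1: "\<bar>of_int \<lfloor>s\<rfloor> - s\<bar> \<le> 1" and h2: "\<bar>of_int \<lfloor>t\<rfloor> - t\<bar> \<le> 1"
      using floor_correct[of s] floor_correct[of t] unfolding abs_le_iff of_int_add of_int_1 by linarith+
    from h2 have h3: "\<bar>of_int \<lfloor>t\<rfloor> - t\<bar> * norm lam \<le> norm lam"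
      using mult_right_mono[of _ 1 "norm lam"] by simp
    show ?thesis
      by (rule mult_right_mono) (use h1 h3 in linarith, simp)
  qed
  also have "\<dots> < e"
  proof -
    have p: "0 < 1 + norm lam" by (simp add: add_pos_nonneg)
    show ?thesis using a(3) p by (simp add: pos_less_divide_eq mult.commute)
  qed
  finally show ?thesis using r by blast
qed


lemma DG_complex:
  assumes nu: "\<nu> \<in> RG" "\<nu> \<noteq> 0" "norm \<nu> < 1" and l1: "lam \<in> RG" "Im lam \<noteq> 0"
    and d: "d \<in> DG"
  shows "a *s d \<in> DG"
proof -
  have "a *s d \<in> closure DG"
    unfolding closure_approachable
  proof (intro allI impI)
    fix e :: real assume e: "e > 0"
    have e': "e / (norm d + 1) > 0" using e by (simp add: add_nonneg_pos)
    obtain r where r: "r \<in> RG" "norm (r - a) < e / (norm d + 1)"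
      using RG_dense[OF nu l1 e'] by blast
    have "r *s d \<in> DG" using r(1) d unfolding RG_def by blast
    moreover have "dist (r *s d) (a *s d) < e"
    proof -
      have eq: "r *s d - a *s d = (r - a) *s d" by (simp add: vec_eq_iff algebra_simps)
      have "dist (r *s d) (a *s d) = norm (r - a) * norm d"
        unfolding dist_norm eq by (rule norm_smult)
      also have "\<dots> \<le> e / (norm d + 1) * norm d"
        using mult_right_mono[OF less_imp_le[OF r(2)] norm_ge_zero[of d]] .
      also have "\<dots> < e" using aux_lt[OF norm_ge_zero[of d] e] by (simp add: mult.commute)
      finally show ?thesis .
    qed
    ultimately show "\<exists>y\<in>DG. dist y (a *s d) < e" by blast
  qed
  then show ?thesis using DG_closed by simp
qed

lemma center_diff:
  assumes cplx: "\<And>a d. d \<in> DG \<Longrightarrow> a *s d \<in> DG"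
    and c: "c \<in> centers G" and c0: "c0 \<in> centers G"
  shows "c - c0 \<in> DG"
proof -
  obtain l b where lb: "l \<noteq> 0" "l \<noteq> 1" "HH l b \<in> G" "HH l b c = c" using centersD c by blast
  obtain m b0 where mb: "m \<noteq> 0" "m \<noteq> 1" "HH m b0 \<in> G" "HH m b0 c0 = c0" using centersD c0 by blast
  have b: "b = c - l *s c" using lb(4) by (simp add: algebra_simps)
  have b0: "b0 = c0 - m *s c0" using mb(4) by (simp add: algebra_simps)
  define t where "t = ((1 - l) * (m - 1)) *s (c0 - c)"
  have "HH l b \<circ> HH m b0 \<circ> inv (HH l b) \<circ> inv (HH m b0) \<in> G"
    using G_comp G_inv lb(3) mb(3) by blast
  moreover have "HH l b \<circ> HH m b0 \<circ> inv (HH l b) \<circ> inv (HH m b0) = HH 1 t"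
    unfolding t_def b b0
    by (rule ext) (simp add: lb(1) mb(1) HH_inv vec_eq_iff field_simps)
  ultimately have "t \<in> TG" unfolding TG_def by simp
  then have "(-1 / ((1 - l) * (m - 1))) *s t \<in> DG" using cplx TG_DG by blast
  moreover have "(-1 / ((1 - l) * (m - 1))) *s t = c - c0"
  proof -
    have nz: "(1 - l) * (m - 1) \<noteq> 0" using lb(2) mb(2) by simp
    have k: "(-1 / ((1 - l) * (m - 1))) * ((1 - l) * (m - 1)) = -1" using nz by simp
    have "(-1 / ((1 - l) * (m - 1))) *s t = ((-1 / ((1 - l) * (m - 1))) * ((1 - l) * (m - 1))) *s (c0 - c)"
      unfolding t_def by (simp add: vec_eq_iff)
    also have "\<dots> = c - c0" unfolding k by (simp add: vec_eq_iff)
    finally show ?thesis .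
  qed
  ultimately show ?thesis by simp
qed

lemma E_G_sub_DG:
  assumes cplx: "\<And>a d. d \<in> DG \<Longrightarrow> a *s d \<in> DG"
    and c0: "c0 \<in> centers G" and x: "x \<in> E_G G"
  shows "x - c0 \<in> DG"
proof -
  have "complex_affine {x. x - c0 \<in> DG}"
    unfolding complex_affine_def
  proof (intro ballI allI)
    fix x y u assume x: "x \<in> {x. x - c0 \<in> DG}" and y: "y \<in> {x. x - c0 \<in> DG}"
    have x': "x - c0 \<in> DG" and y': "y - c0 \<in> DG" using x y by simp_all
    have m: "(1 - u) *s (x - c0) + u *s (y - c0) \<in> DG" by (rule DG_add[OF cplx[OF x'] cplx[OF y']])
    have eq: "(1 - u) *s x + u *s y - c0 = (1 - u) *s (x - c0) + u *s (y - c0)"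
      by (simp add: vec_eq_iff algebra_simps)
    show "(1 - u) *s x + u *s y \<in> {x. x - c0 \<in> DG}" unfolding mem_Collect_eq by (subst eq) (rule m)
  qed
  moreover have "centers G \<subseteq> {x. x - c0 \<in> DG}" using center_diff[OF cplx _ c0] by blast
  ultimately have "E_G G \<subseteq> {x. x - c0 \<in> DG}" by (rule E_G_least)
  then show ?thesis using x by blast
qed

lemma HH_pow:
  assumes "\<beta> = (1 - \<nu>) *s c"
  shows "HH \<nu> \<beta> ^^ k = HH (\<nu> ^ k) ((1 - \<nu> ^ k) *s c)"
proof (induction k)
  case 0 show ?case by (simp add: HH_id[symmetric])
next
  case (Suc k)
  have "HH \<nu> \<beta> ^^ Suc k = HH \<nu> \<beta> \<circ> HH \<nu> \<beta> ^^ k" by simp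
  also have "\<dots> = HH \<nu> \<beta> \<circ> HH (\<nu> ^ k) ((1 - \<nu> ^ k) *s c)" by (simp only: Suc)
  also have "\<dots> = HH (\<nu> ^ Suc k) ((1 - \<nu> ^ Suc k) *s c)"
    by (rule ext) (simp add: assms vec_eq_iff algebra_simps)
  finally show ?case .
qed

lemma pow_in_G: "f \<in> G \<Longrightarrow> f ^^ k \<in> G"
  by (induction k) (simp_all add: G_id G_comp)


lemma part2:
  assumes nrot: "\<not> G \<subseteq> rot_maps" and nreal: "\<not> ratios G \<subseteq> \<real>"
  shows "minimal_set G (E_G G) \<and> (\<forall>z. E_G G \<subseteq> closure (orbit G z))"
proof -
  have Gh: "G \<subseteq> homothety_maps" using sg unfolding is_subgroup_H_def by blast
  obtain f where f: "f \<in> G" "cmod (ratio f) \<noteq> 1" using nrot Gh unfolding rot_maps_def by blast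
  obtain l b where lb: "l \<noteq> 0" "f = HH l b" using G_HH f(1) by blast
  obtain \<nu> \<beta> where nb: "HH \<nu> \<beta> \<in> G" "\<nu> \<noteq> 0" "norm \<nu> < 1"
  proof (cases "norm l < 1")
    case True then show ?thesis using that f lb by blast
  next
    case False
    then have "norm l > 1" using f lb by simp
    then have "norm (1/l) < 1" by (simp add: norm_divide divide_less_eq)
    moreover have "HH (1/l) (- ((1/l) *s b)) \<in> G" using G_inv[OF f(1)] lb by (simp add: HH_inv)
    ultimately show ?thesis using that lb by simp
  qed
  obtain f1 where f1: "f1 \<in> G" "ratio f1 \<notin> \<real>" using nreal unfolding ratios_def by blast
  obtain lam b1 where lb1: "lam \<noteq> 0" "f1 = HH lam b1" using G_HH f1(1) by blast
  have l1: "lam \<in> RG" "Im lam \<noteq> 0" using RG_ratio f1 lb1 complex_is_Real_iff by auto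
  have nu: "\<nu> \<in> RG" "\<nu> \<noteq> 0" "norm \<nu> < 1" using RG_ratio nb by auto
  have cplx: "\<And>a d. d \<in> DG \<Longrightarrow> a *s d \<in> DG" using DG_complex[OF nu l1] by blast
  have n1: "\<nu> \<noteq> 1" using nb(3) by auto
  define c where "c = (1/(1-\<nu>)) *s \<beta>"
  have bc: "\<beta> = (1 - \<nu>) *s c" unfolding c_def using n1 by (simp add: vec_eq_iff)
  have "HH \<nu> \<beta> c = c" unfolding bc by (simp add: vec_eq_iff algebra_simps)
  then have c: "c \<in> centers G" using centersI[OF nb(1)] n1 by simp
  have allc: "E_G G \<subseteq> closure (orbit G z)" for z
  proof
    fix x assume x: "x \<in> E_G G"
    have xc: "x - c \<in> DG" using E_G_sub_DG[OF cplx c x] .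
    show "x \<in> closure (orbit G z)"
      unfolding closure_approachable
    proof (intro allI impI)
      fix e :: real assume e: "e > 0"
      obtain t where t: "t \<in> TG" "dist t (x - c) < e/2"
        using xc e unfolding DG_def closure_approachable by (meson half_gt_zero)
      have e2: "e / 2 / (norm (z - c) + 1) > 0" using e by (simp add: add_nonneg_pos)
      obtain k where k: "norm \<nu> ^ k < e / 2 / (norm (z - c) + 1)"
        using real_arch_pow_inv[OF e2 nb(3)] by blast
      define g where "g = HH 1 t \<circ> (HH \<nu> \<beta> ^^ k)"
      have g: "g \<in> G" unfolding g_def using G_comp pow_in_G[OF nb(1)] t(1) unfolding TG_def by blast
      have gz: "g z - x = (\<nu> ^ k) *s (z - c) + (t - (x - c))"
        unfolding g_def HH_pow[OF bc] by (simp add: vec_eq_iff algebra_simps)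
      have "dist (g z) x \<le> norm ((\<nu> ^ k) *s (z - c)) + norm (t - (x - c))"
        unfolding dist_norm gz by (rule norm_triangle_ineq)
      also have "\<dots> = norm \<nu> ^ k * norm (z - c) + dist t (x - c)"
        by (simp only: norm_smult norm_power dist_norm)
      also have "\<dots> < e"
      proof -
        have "norm \<nu> ^ k * norm (z - c) \<le> e / 2 / (norm (z - c) + 1) * norm (z - c)"
          using mult_right_mono[OF less_imp_le[OF k] norm_ge_zero] .
        also have "\<dots> \<le> e / 2"
          using aux_lt[OF norm_ge_zero[of "z - c"], of "e/2"] e by (simp add: mult.commute)
        finally show ?thesis using t(2) by linarith
      qed
      finally have "dist (g z) x < e" .
      moreover have "g z \<in> orbit G z" unfolding orbit_def using g by blast
      ultimately show "\<exists>y\<in>orbit G z. dist y x < e" by blast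
    qed
  qed
  have "minimal_set G (E_G G)"
    unfolding minimal_set_def
  proof (intro conjI allI impI)
    show "E_G G \<noteq> {}" using c centers_E_G by blast
    show "closed (E_G G)" by (rule E_G_closed)
    show "invariant_set G (E_G G)" unfolding invariant_set_def using E_G_invariant by blast
    fix A assume A: "A \<noteq> {} \<and> closed A \<and> A \<subseteq> E_G G \<and> invariant_set G A"
    then obtain a where a: "a \<in> A" by blast
    have "orbit G a \<subseteq> A" using A a unfolding orbit_def invariant_set_def by blast
    then have "closure (orbit G a) \<subseteq> A" using A closure_minimal by blast
    then show "A = E_G G" using allc[of a] A by blast
  qed
  then show ?thesis using allc by blast
qed


end

lemma orbit_homeo:
  assumes K: "K \<ge> 0" "K' \<ge> 0"
    and A: "\<And>f g. f \<in> G \<Longrightarrow> g \<in> G \<Longrightarrow> dist (f y) (g y) \<le> K * dist (f z) (g z)"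
    and B: "\<And>f g. f \<in> G \<Longrightarrow> g \<in> G \<Longrightarrow> dist (f z) (g z) \<le> K' * dist (f y) (g y)"
  shows "orbit G z homeomorphic orbit G y"
proof -
  define \<phi> where "\<phi> x = (SOME f. f \<in> G \<and> f z = x) y" for x
  define \<psi> where "\<psi> x = (SOME f. f \<in> G \<and> f y = x) z" for x
  have phi: "\<phi> (f z) = f y" if f: "f \<in> G" for f
  proof -
    let ?g = "SOME g. g \<in> G \<and> g z = f z"
    have g: "?g \<in> G \<and> ?g z = f z" by (rule someI[of _ f]) (use f in auto)
    have "dist (?g y) (f y) \<le> 0" using A[of ?g f] g f by simp
    then show ?thesis unfolding \<phi>_def by simp
  qed
  have psi: "\<psi> (f y) = f z" if f: "f \<in> G" for f
  proof -
    let ?g = "SOME g. g \<in> G \<and> g y = f y"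
    have g: "?g \<in> G \<and> ?g y = f y" by (rule someI[of _ f]) (use f in auto)
    have "dist (?g z) (f z) \<le> 0" using B[of ?g f] g f by simp
    then show ?thesis unfolding \<psi>_def by simp
  qed
  have "homeomorphism (orbit G z) (orbit G y) \<phi> \<psi>"
    unfolding homeomorphism_def
  proof (intro conjI)
    show "\<forall>x\<in>orbit G z. \<psi> (\<phi> x) = x" unfolding orbit_def using phi psi by auto
    show "\<forall>x\<in>orbit G y. \<phi> (\<psi> x) = x" unfolding orbit_def using phi psi by auto
    show "\<phi> ` orbit G z = orbit G y" unfolding orbit_def using phi by (auto simp: image_iff) (metis phi)
    show "\<psi> ` orbit G y = orbit G z" unfolding orbit_def using psi by (auto simp: image_iff) (metis psi)
    show "continuous_on (orbit G z) \<phi>"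
      unfolding continuous_on_iff
    proof (intro ballI allI impI)
      fix x e assume x: "x \<in> orbit G z" and e: "(e::real) > 0"
      obtain f where f: "f \<in> G" "x = f z" using x unfolding orbit_def by blast
      show "\<exists>d>0. \<forall>x'\<in>orbit G z. dist x' x < d \<longrightarrow> dist (\<phi> x') (\<phi> x) < e"
      proof (intro exI[of _ "e/(K+1)"] conjI ballI impI)
        show "e/(K+1) > 0" using e K by simp
        fix x' assume x': "x' \<in> orbit G z" "dist x' x < e/(K+1)"
        obtain g where g: "g \<in> G" "x' = g z" using x' unfolding orbit_def by blast
        have "dist (\<phi> x') (\<phi> x) = dist (g y) (f y)" using phi f g by simp
        also have "\<dots> \<le> K * dist (g z) (f z)" using A f g by blast
        also have "\<dots> \<le> K * (e/(K+1))" using mult_left_mono[OF less_imp_le[OF x'(2)] K(1)] f g by simp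
        also have "\<dots> < e" using K e by (simp add: field_simps)
        finally show "dist (\<phi> x') (\<phi> x) < e" .
      qed
    qed
    show "continuous_on (orbit G y) \<psi>"
      unfolding continuous_on_iff
    proof (intro ballI allI impI)
      fix x e assume x: "x \<in> orbit G y" and e: "(e::real) > 0"
      obtain f where f: "f \<in> G" "x = f y" using x unfolding orbit_def by blast
      show "\<exists>d>0. \<forall>x'\<in>orbit G y. dist x' x < d \<longrightarrow> dist (\<psi> x') (\<psi> x) < e"
      proof (intro exI[of _ "e/(K'+1)"] conjI ballI impI)
        show "e/(K'+1) > 0" using e K by simp
        fix x' assume x': "x' \<in> orbit G y" "dist x' x < e/(K'+1)"
        obtain g where g: "g \<in> G" "x' = g y" using x' unfolding orbit_def by blast
        have "dist (\<psi> x') (\<psi> x) = dist (g z) (f z)" using psi f g by simp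
        also have "\<dots> \<le> K' * dist (g y) (f y)" using B f g by blast
        also have "\<dots> \<le> K' * (e/(K'+1))" using mult_left_mono[OF less_imp_le[OF x'(2)] K(2)] f g by simp
        also have "\<dots> < e" using K e by (simp add: field_simps)
        finally show "dist (\<psi> x') (\<psi> x) < e" .
      qed
    qed
  qed
  then show ?thesis unfolding homeomorphic_def by blast
qed


theorem corollary1p2:
  fixes G :: "(complex^'n \<Rightarrow> complex^'n) set"
  assumes "is_subgroup_H G"
    and "\<exists>f\<in>G. \<exists>g\<in>G. f \<circ> g \<noteq> g \<circ> f"
    and "\<not> ratios G \<subseteq> \<real>"
    and "\<not> G \<subseteq> SR"
    and "UNIV - E_G G \<noteq> {}"
  shows "(\<forall>z \<in> UNIV - E_G G. \<forall>w \<in> closure (orbit G z) \<inter> (UNIV - E_G G).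
            closure (orbit G w) \<inter> (UNIV - E_G G) = closure (orbit G z) \<inter> (UNIV - E_G G))
       \<and> (\<not> G \<subseteq> rot_maps \<longrightarrow>
            minimal_set G (E_G G) \<and> (\<forall>z. E_G G \<subseteq> closure (orbit G z)))
       \<and> (\<forall>z \<in> UNIV - E_G G. \<forall>y \<in> UNIV - E_G G. orbit G z homeomorphic orbit G y)"
proof (intro conjI ballI impI)
  note sg = assms(1)
  have ne: "E_G G \<noteq> {}" by (rule E_G_nonempty[OF sg assms(3)])
  fix z w assume z: "z \<in> UNIV - E_G G" and w: "w \<in> closure (orbit G z) \<inter> (UNIV - E_G G)"
  have "closure (orbit G w) \<subseteq> closure (orbit G z)" using closure_orbit_sub[OF sg] w by blast
  moreover have "z \<in> closure (orbit G w)" using back_in_closure[OF sg _ ne] z w by blast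
  then have "closure (orbit G z) \<subseteq> closure (orbit G w)" using closure_orbit_sub[OF sg] by blast
  ultimately show "closure (orbit G w) \<inter> (UNIV - E_G G) = closure (orbit G z) \<inter> (UNIV - E_G G)" by blast
next
  assume "\<not> G \<subseteq> rot_maps"
  then show "minimal_set G (E_G G)" "\<forall>z. E_G G \<subseteq> closure (orbit G z)"
    using part2[OF assms(1) _ assms(3)] by blast+
next
  note sg = assms(1)
  have ne: "E_G G \<noteq> {}" by (rule E_G_nonempty[OF sg assms(3)])
  fix z y assume z: "z \<in> UNIV - E_G G" and y: "y \<in> UNIV - E_G G"
  show "orbit G z homeomorphic orbit G y"
  proof (rule orbit_homeo)
    show "0 \<le> 1 + dist y z / infdist z (E_G G)" by (simp add: infdist_nonneg add_nonneg_nonneg)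
    show "0 \<le> 1 + dist z y / infdist y (E_G G)" by (simp add: infdist_nonneg add_nonneg_nonneg)
    fix f g assume "f \<in> G" "g \<in> G"
    then show "dist (f y) (g y) \<le> (1 + dist y z / infdist z (E_G G)) * dist (f z) (g z)"
      "dist (f z) (g z) \<le> (1 + dist z y / infdist y (E_G G)) * dist (f y) (g y)"
      using lip_orbit[OF sg _ ne] z y by blast+
  qed
qed

end
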